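(* Let $R$ be a ring and $S$ a (left and right) Ore set in $R$. Then: (1) $\mathcal J(R,S)\neq\emptyset$; (2) $\mathfrak p(S)$ is the least element (w.r.t. inclusion) of $\mathcal J(R,S)$; (3) if, in addition, $S$ is a left and right denominator set with $\mathrm{ass}(S)=\mathfrak a$, then $\mathfrak p(S)=\mathfrak a$.
   Context: Rings are associative with $1$. A multiplicatively closed subset $S$ ($1\in S$, $0\notin S$) is an Ore set if $Sr\cap Rs\ne\emptyset$ and $rS\cap sR\ne\emptyset$ for all $r\in R,s\in S$. It is a (left and right) denominator set if moreover $rs=0$ ($s\in S$) implies $tr=0$ for some $t\in S$, and $sr=0$ implies $rt=0$ for some $t\in S$; then $\mathrm{ass}(S):=\{r\mid sr=0 \text{ for some } s\in S\}$. For a ring $B$ and $T\subseteq B$, $\mathrm{ass}_l(T,B):=\{b\mid tb=0\text{ for some }t\in T\}$, $\mathrm{ass}_r(T,B):=\{b\mid bt=0\text{ for some }t\in T\}$. Define ideals $\mathfrak p_\alpha$ ($\alpha\ge1$ ordinals): $\mathfrak p_1:=\mathrm{ass}_l(S,R)+\mathrm{ass}_r(S,R)$; $\mathfrak p_{\alpha+1}:=\pi_\alpha^{-1}(\mathrm{ass}_l(\pi_\alpha(S),R/\mathfrak p_\alpha)+\mathrm{ass}_r(\pi_\alpha(S),R/\mathfrak p_\alpha))$ with $\pi_\alpha:R\to R/\mathfrak p_\alpha$ canonical; $\mathfrak p_\alpha:=\bigcup_{\beta<\alpha}\mathfrak p_\beta$ for limit $\alpha$; $\mathfrak p(S):=\bigcup_\alpha\mathfrak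 p_\alpha$. $\mathcal J(R,S)$ is the set of ideals $\mathfrak b$ of $R$ such that $\pi_{\mathfrak b}(S)$ is a (left and right) denominator set of $R/\mathfrak b$ with $\mathrm{ass}(\pi_{\mathfrak b}(S))=0$, $\pi_{\mathfrak b}:R\to R/\mathfrak b$ canonical. *)

theory Defs
  imports Main
begin

text \<open>The quotient ring R/b is represented via the
  congruence x \<equiv> y (mod b) iff x - y \<in> b; thus "pi_b(x) = pi_b(y)" is
  written "x - y \<in> b" and "pi_b(x) = 0" is written "x \<in> b".\<close>

definition two_sided_ideal :: "'a::ring_1 set \<Rightarrow> bool" where
  "two_sided_ideal I \<longleftrightarrow> 0 \<in> I \<and> (\<forall>x\<in>I. \<forall>y\<in>I. x + y \<in> I) \<and> (\<forall>x\<in>I. - x \<in> I)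
     \<and> (\<forall>x\<in>I. \<forall>r. r * x \<in> I \<and> x * r \<in> I)"

definition mult_closed :: "'a::ring_1 set \<Rightarrow> bool" where
  "mult_closed S \<longleftrightarrow> 1 \<in> S \<and> 0 \<notin> S \<and> (\<forall>s\<in>S. \<forall>t\<in>S. s * t \<in> S)"

definition ore_set :: "'a::ring_1 set \<Rightarrow> bool" where
  "ore_set S \<longleftrightarrow> mult_closed S \<and>
     (\<forall>r. \<forall>s\<in>S. (\<exists>s'\<in>S. \<exists>r'. s' * r = r' * s) \<and> (\<exists>s'\<in>S. \<exists>r'. r * s' = s * r'))"

definition denominator_set :: "'a::ring_1 set \<Rightarrow> bool" where
  "denominator_set S \<longleftrightarrow> ore_set S \<and>
     (\<forall>r. \<forall>s\<in>S. r * s = 0 \<longrightarrow> (\<exists>t\<in>S. t * r = 0)) \<and>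
     (\<forall>r. \<forall>s\<in>S. s * r = 0 \<longrightarrow> (\<exists>t\<in>S. r * t = 0))"

definition ass :: "'a::ring_1 set \<Rightarrow> 'a set" where
  "ass S = {r. \<exists>s\<in>S. s * r = 0}"

definition ore_set_mod :: "'a::ring_1 set \<Rightarrow> 'a set \<Rightarrow> bool" where
  "ore_set_mod b S \<longleftrightarrow>
     \<comment> \<open>1 \<in> pi_b(S) and multiplicative closedness are inherited from S; 0 \<notin> pi_b(S):\<close>
     1 \<in> S \<and> (\<forall>s\<in>S. \<forall>t\<in>S. s * t \<in> S) \<and> (\<forall>s\<in>S. s \<notin> b) \<and>
     (\<forall>r. \<forall>s\<in>S. (\<exists>s'\<in>S. \<exists>r'. s' * r - r' * s \<in> b) \<and> (\<exists>s'\<in>S. \<exists>r'. r * s' - s * r' \<in> b))"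

definition denominator_set_mod :: "'a::ring_1 set \<Rightarrow> 'a set \<Rightarrow> bool" where
  "denominator_set_mod b S \<longleftrightarrow> ore_set_mod b S \<and>
     (\<forall>r. \<forall>s\<in>S. r * s \<in> b \<longrightarrow> (\<exists>t\<in>S. t * r \<in> b)) \<and>
     (\<forall>r. \<forall>s\<in>S. s * r \<in> b \<longrightarrow> (\<exists>t\<in>S. r * t \<in> b))"

definition ass_mod_zero :: "'a::ring_1 set \<Rightarrow> 'a set \<Rightarrow> bool" where
  "ass_mod_zero b S \<longleftrightarrow> (\<forall>r. \<forall>s\<in>S. s * r \<in> b \<longrightarrow> r \<in> b)"

definition JRS :: "'a::ring_1 set \<Rightarrow> 'a set set" where
  "JRS S = {b. two_sided_ideal b \<and> denominator_set_mod b S \<and> ass_mod_zero b S}"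

definition ass_l :: "'a::ring_1 set \<Rightarrow> 'a set" where
  "ass_l S = {r. \<exists>s\<in>S. s * r = 0}"

definition ass_r :: "'a::ring_1 set \<Rightarrow> 'a set" where
  "ass_r S = {r. \<exists>s\<in>S. r * s = 0}"

definition set_plus :: "'a::ring_1 set \<Rightarrow> 'a set \<Rightarrow> 'a set" where
  "set_plus A B = {a + c | a c. a \<in> A \<and> c \<in> B}"

definition p1 :: "'a::ring_1 set \<Rightarrow> 'a set" where
  "p1 S = set_plus (ass_l S) (ass_r S)"

text \<open>Successor step: p_{alpha+1} = pi^{-1}(ass_l(pi S, R/p) + ass_r(pi S, R/p)) with p = p_alpha.\<close>
definition p_succ :: "'a::ring_1 set \<Rightarrow> 'a set \<Rightarrow> 'a set" where
  "p_succ S p = {x. \<exists>a c. x - (a + c) \<in> p \<and> (\<exists>s\<in>S. s * a \<in> p) \<and> (\<exists>s\<in>S. c * s \<in> p)}"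

text \<open>The transfinite sequence p_alpha (alpha \<ge> 1), represented as the set of its
  stages: the least family containing p_1, closed under the successor step and
  under unions (limit stages). p(S) is the union of all stages.\<close>
inductive_set p_stages :: "'a::ring_1 set \<Rightarrow> 'a set set" for S :: "'a set" where
  base: "p1 S \<in> p_stages S"
| succ: "p \<in> p_stages S \<Longrightarrow> p_succ S p \<in> p_stages S"
| lim: "M \<in> Pow (p_stages S) \<Longrightarrow> M \<noteq> {} \<Longrightarrow> \<Union>M \<in> p_stages S"
  monos Pow_mono

definition pS :: "'a::ring_1 set \<Rightarrow> 'a set" where
  "pS S = \<Union>(p_stages S)"

end

theory Submission
  imports Defs
begin

context
  fixes S :: "'a::ring_1 set"
  assumes ore: "ore_set S"
begin

lemma one_S: "1 \<in> S" and zero_nS: "0 \<notin> S" and mulS: "s \<in> S \<Longrightarrow> t \<in> S \<Longrightarrow> s * t \<in> S"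
  using ore by (auto simp: ore_set_def mult_closed_def)

lemma oreL: "s \<in> S \<Longrightarrow> \<exists>s'\<in>S. \<exists>r'. s' * r = r' * s"
  using ore by (auto simp: ore_set_def)

lemma oreR: "s \<in> S \<Longrightarrow> \<exists>s'\<in>S. \<exists>r'. r * s' = s * r'"
  using ore by (auto simp: ore_set_def)

lemma stages_zero: "p \<in> p_stages S \<Longrightarrow> 0 \<in> p"
proof (induction rule: p_stages.induct)
  case base
  have "0 = 0 + (0::'a)" by simp
  moreover have "(0::'a) \<in> ass_l S" "(0::'a) \<in> ass_r S"
    unfolding ass_l_def ass_r_def using one_S by auto
  ultimately show ?case unfolding p1_def set_plus_def by blast
next
  case (succ p)
  then show ?case unfolding p_succ_def using one_S by (auto intro!: exI[of _ 0])
next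
  case (lim M)
  then show ?case by auto
qed

lemma succ_infl: "0 \<in> p \<Longrightarrow> p \<subseteq> p_succ S p"
  unfolding p_succ_def using one_S by (auto intro!: exI[of _ 0])

lemma stages_infl: "p \<in> p_stages S \<Longrightarrow> p \<subseteq> p_succ S p"
  using stages_zero succ_infl by blast

lemma stages_least: "p \<in> p_stages S \<Longrightarrow> p1 S \<subseteq> p"
proof (induction rule: p_stages.induct)
  case base then show ?case by simp
next
  case (succ p) then show ?case using stages_infl by blast
next
  case (lim M) then show ?case by blast
qed

lemma total':
  assumes "X \<in> p_stages S" and "Y \<in> p_stages S"
    and *: "\<And>Z. Z \<in> p_stages S \<Longrightarrow> Z \<subseteq> Y \<Longrightarrow> Z = Y \<or> p_succ S Z \<subseteq> Y"
  shows "X \<subseteq> Y \<or> p_succ S Y \<subseteq> X"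
  using \<open>X \<in> p_stages S\<close>
proof induct
  case base
  then show ?case using stages_least[OF assms(2)] by blast
next
  case (succ X)
  from succ.hyps(2) show ?case
  proof
    assume "X \<subseteq> Y"
    then have "X = Y \<or> p_succ S X \<subseteq> Y" using *[OF succ.hyps(1)] by simp
    then show ?thesis by auto
  next
    assume "p_succ S Y \<subseteq> X"
    then show ?thesis using stages_infl[OF succ.hyps(1)] by auto
  qed
next
  case (lim M)
  then show ?case by blast
qed

lemma subsetD':
  assumes "X \<in> p_stages S" "Y \<in> p_stages S" "Y \<subseteq> X"
  shows "X = Y \<or> p_succ S Y \<subseteq> X"
  using assms
proof (induct arbitrary: Y)
  case base
  then show ?case using stages_least[of Y] by blast
next
  case (succ X)
  note * = succ.hyps(2)
  have "Y \<subseteq> X \<or> p_succ S X \<subseteq> Y"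
    using total'[OF \<open>Y \<in> p_stages S\<close> succ.hyps(1)] * by blast
  then show ?case
  proof
    assume "Y \<subseteq> X"
    then have "X = Y \<or> p_succ S Y \<subseteq> X" using *[OF \<open>Y \<in> p_stages S\<close>] by simp
    then show ?thesis using stages_infl[OF succ.hyps(1)] by auto
  next
    assume "p_succ S X \<subseteq> Y"
    with \<open>Y \<subseteq> p_succ S X\<close> show ?thesis by blast
  qed
next
  case (lim X)
  show ?case
  proof (rule ccontr)
    assume "\<not> ?thesis"
    with \<open>Y \<subseteq> \<Union>X\<close> obtain x y z
      where "\<not> p_succ S Y \<subseteq> \<Union>X"
        and "x \<in> X" and "y \<in> x" and "y \<notin> Y"
        and "z \<in> p_succ S Y" and "\<forall>x\<in>X. z \<notin> x" by blast
    with lim have "x \<in> p_stages S" by blast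
    from lim and \<open>x \<in> X\<close> have *: "\<And>y. y \<in> p_stages S \<Longrightarrow> y \<subseteq> x \<Longrightarrow> x = y \<or> p_succ S y \<subseteq> x"
      by blast
    with total' [OF \<open>Y \<in> p_stages S\<close> \<open>x \<in> p_stages S\<close>] have "Y \<subseteq> x \<or> p_succ S x \<subseteq> Y"
      by blast
    then show False
    proof
      assume "Y \<subseteq> x"
      with * [OF \<open>Y \<in> p_stages S\<close>] \<open>y \<in> x\<close> \<open>y \<notin> Y\<close> \<open>x \<in> X\<close> \<open>\<not> p_succ S Y \<subseteq> \<Union>X\<close> show False
        by blast
    next
      assume "p_succ S x \<subseteq> Y"
      with \<open>y \<notin> Y\<close> stages_infl[OF \<open>x \<in> p_stages S\<close>] \<open>y \<in> x\<close> show False by blast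
    qed
  qed
qed

lemma stages_total:
  assumes "X \<in> p_stages S" and "Y \<in> p_stages S"
  shows "X \<subseteq> Y \<or> Y \<subseteq> X"
proof (cases "\<forall>Z\<in>p_stages S. Z \<subseteq> Y \<longrightarrow> Z = Y \<or> p_succ S Z \<subseteq> Y")
  case True
  with total' [OF assms]
  have "X \<subseteq> Y \<or> p_succ S Y \<subseteq> X" by blast
  with stages_infl [OF assms(2)] show ?thesis by blast
next
  case False
  then obtain Z where "Z \<in> p_stages S" and "Z \<subseteq> Y" and "Z \<noteq> Y" and "\<not> p_succ S Z \<subseteq> Y"
    by blast
  with subsetD'[OF \<open>Y \<in> p_stages S\<close> \<open>Z \<in> p_stages S\<close> \<open>Z \<subseteq> Y\<close>] show ?thesis
    by simp
qed


lemma idI: "two_sided_ideal p \<Longrightarrow> 0 \<in> p"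
  and idA: "two_sided_ideal p \<Longrightarrow> x \<in> p \<Longrightarrow> y \<in> p \<Longrightarrow> x + y \<in> p"
  and idN: "two_sided_ideal p \<Longrightarrow> x \<in> p \<Longrightarrow> - x \<in> p"
  and idL: "two_sided_ideal p \<Longrightarrow> x \<in> p \<Longrightarrow> r * x \<in> p"
  and idR: "two_sided_ideal p \<Longrightarrow> x \<in> p \<Longrightarrow> x * r \<in> p"
  by (auto simp: two_sided_ideal_def)

lemma idD: "two_sided_ideal p \<Longrightarrow> x \<in> p \<Longrightarrow> y \<in> p \<Longrightarrow> x - y \<in> p"
  using idA idN by (metis diff_conv_add_uminus)

lemma A_add: assumes p: "two_sided_ideal p" and "s1 \<in> S" "s1 * a1 \<in> p" "s2 \<in> S" "s2 * a2 \<in> p"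
  shows "\<exists>t\<in>S. t * (a1 + a2) \<in> p"
proof -
  obtain s' r' where s': "s' \<in> S" "s' * s1 = r' * s2" using oreL[OF \<open>s2 \<in> S\<close>, of s1] by blast
  have "(s' * s1) * (a1 + a2) = s' * (s1 * a1) + r' * (s2 * a2)"
    by (simp add: distrib_left mult.assoc[symmetric] s'(2))
  also have "\<dots> \<in> p" using assms by (blast intro: idA[OF p] idL[OF p])
  finally show ?thesis using mulS[OF s'(1) \<open>s1 \<in> S\<close>] by blast
qed

lemma A_lmul: assumes p: "two_sided_ideal p" and "s \<in> S" "s * a \<in> p"
  shows "\<exists>t\<in>S. t * (r * a) \<in> p"
proof -
  obtain s' r' where s': "s' \<in> S" "s' * r = r' * s" using oreL[OF \<open>s \<in> S\<close>, of r] by blast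
  have "s' * (r * a) = r' * (s * a)" by (simp add: mult.assoc[symmetric] s'(2))
  also have "\<dots> \<in> p" using assms by (blast intro: idL[OF p])
  finally show ?thesis using s'(1) by blast
qed

lemma C_add: assumes p: "two_sided_ideal p" and "s1 \<in> S" "a1 * s1 \<in> p" "s2 \<in> S" "a2 * s2 \<in> p"
  shows "\<exists>t\<in>S. (a1 + a2) * t \<in> p"
proof -
  obtain s' r' where s': "s' \<in> S" "s2 * s' = s1 * r'" using oreR[OF \<open>s1 \<in> S\<close>, of s2] by blast
  have "(a1 + a2) * (s2 * s') = (a1 * s1) * r' + (a2 * s2) * s'"
    by (simp add: distrib_right mult.assoc s'(2))
  also have "\<dots> \<in> p" using assms by (blast intro: idA[OF p] idR[OF p])
  finally show ?thesis using mulS[OF \<open>s2 \<in> S\<close> s'(1)] by blast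
qed

lemma C_rmul: assumes p: "two_sided_ideal p" and "s \<in> S" "a * s \<in> p"
  shows "\<exists>t\<in>S. (a * r) * t \<in> p"
proof -
  obtain s' r' where s': "s' \<in> S" "r * s' = s * r'" using oreR[OF \<open>s \<in> S\<close>, of r] by blast
  have "(a * r) * s' = (a * s) * r'" by (simp add: mult.assoc s'(2))
  also have "\<dots> \<in> p" using assms by (blast intro: idR[OF p])
  finally show ?thesis using s'(1) by blast
qed

lemma ideal_succ: assumes p: "two_sided_ideal p" shows "two_sided_ideal (p_succ S p)"
  unfolding two_sided_ideal_def
proof (intro conjI ballI allI)
  show "0 \<in> p_succ S p" using succ_infl idI[OF p] by blast
next
  fix x y assume "x \<in> p_succ S p" "y \<in> p_succ S p"
  then obtain a c s t a' c' s2 t2 where x: "x - (a + c) \<in> p" "s \<in> S" "s * a \<in> p" "t \<in> S" "c * t \<in> p"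
    and y: "y - (a' + c') \<in> p" "s2 \<in> S" "s2 * a' \<in> p" "t2 \<in> S" "c' * t2 \<in> p"
    unfolding p_succ_def by blast
  have "(x + y) - ((a + a') + (c + c')) = (x - (a + c)) + (y - (a' + c'))" by (simp add: algebra_simps)
  also have "\<dots> \<in> p" using x y idA[OF p] by blast
  finally show "x + y \<in> p_succ S p" unfolding p_succ_def
    using A_add[OF p x(2,3) y(2,3)] C_add[OF p x(4,5) y(4,5)] by blast
next
  fix x assume "x \<in> p_succ S p"
  then obtain a c s t where x: "x - (a + c) \<in> p" "s \<in> S" "s * a \<in> p" "t \<in> S" "c * t \<in> p"
    unfolding p_succ_def by blast
  have "- x - (- a + - c) = - (x - (a + c))" by (simp add: algebra_simps)
  also have "\<dots> \<in> p" using x idN[OF p] by blast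
  finally have 1: "- x - (- a + - c) \<in> p" .
  have "s * - a \<in> p" "- c * t \<in> p" using x idN[OF p] by auto
  then show "- x \<in> p_succ S p" unfolding p_succ_def using 1 x by blast
next
  fix x r assume "x \<in> p_succ S p"
  then obtain a c s t where x: "x - (a + c) \<in> p" "s \<in> S" "s * a \<in> p" "t \<in> S" "c * t \<in> p"
    unfolding p_succ_def by blast
  have "r * x - (r * a + r * c) = r * (x - (a + c))" by (simp add: algebra_simps)
  also have "\<dots> \<in> p" using x idL[OF p] by blast
  finally have 1: "r * x - (r * a + r * c) \<in> p" .
  have 2: "(r * c) * t \<in> p" using x idL[OF p] by (simp add: mult.assoc)
  show "r * x \<in> p_succ S p" unfolding p_succ_def using 1 2 x A_lmul[OF p x(2,3), of r] by blast
  have "x * r - (a * r + c * r) = (x - (a + c)) * r" by (simp add: algebra_simps)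
  also have "\<dots> \<in> p" using x idR[OF p] by blast
  finally have 1: "x * r - (a * r + c * r) \<in> p" .
  have 2: "s * (a * r) \<in> p" using x idR[OF p] by (simp add: mult.assoc[symmetric])
  show "x * r \<in> p_succ S p" unfolding p_succ_def using 1 2 x C_rmul[OF p x(4,5), of r] by blast
qed

lemma ideal_zero: "two_sided_ideal {0::'a}"
  by (simp add: two_sided_ideal_def)

lemma p1_eq: "p1 S = p_succ S {0}"
  unfolding p1_def p_succ_def set_plus_def ass_l_def ass_r_def
  by (auto simp: algebra_simps)

lemma disj_succ: assumes p: "two_sided_ideal p" and d: "\<forall>s\<in>S. s \<notin> p"
  shows "\<forall>s\<in>S. s \<notin> p_succ S p"
proof (intro ballI notI)
  fix u assume "u \<in> S" "u \<in> p_succ S p"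
  then obtain a c s t where x: "u - (a + c) \<in> p" "s \<in> S" "s * a \<in> p" "t \<in> S" "c * t \<in> p"
    unfolding p_succ_def by blast
  have "s * u * t = s * (u - (a + c)) * t + (s * a) * t + s * (c * t)"
    by (simp add: algebra_simps)
  also have "\<dots> \<in> p" using x by (blast intro: idA[OF p] idL[OF p] idR[OF p])
  finally show False using d mulS[OF mulS[OF x(2) \<open>u \<in> S\<close>] x(4)] by blast
qed

lemma union_ideal: assumes "M \<subseteq> p_stages S" "M \<noteq> {}" "\<forall>m\<in>M. two_sided_ideal m"
  shows "two_sided_ideal (\<Union>M)"
  unfolding two_sided_ideal_def
proof (intro conjI ballI allI)
  show "0 \<in> \<Union>M" using assms idI by blast
next
  fix x y assume "x \<in> \<Union>M" "y \<in> \<Union>M"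
  then obtain m n where "x \<in> m" "y \<in> n" "m \<in> M" "n \<in> M" by blast
  then have "m \<subseteq> n \<or> n \<subseteq> m" using stages_total assms(1) by blast
  then show "x + y \<in> \<Union>M" using \<open>x \<in> m\<close> \<open>y \<in> n\<close> \<open>m \<in> M\<close> \<open>n \<in> M\<close> assms(3) idA by blast
next
  fix x assume "x \<in> \<Union>M" then show "- x \<in> \<Union>M" using assms(3) idN by blast
next
  fix x r assume "x \<in> \<Union>M"
  then show "r * x \<in> \<Union>M" "x * r \<in> \<Union>M" using assms(3) idL idR by blast+
qed

lemma stages_ideal: "p \<in> p_stages S \<Longrightarrow> two_sided_ideal p \<and> (\<forall>s\<in>S. s \<notin> p)"
proof (induction rule: p_stages.induct)
  case base
  show ?case unfolding p1_eq using ideal_succ[OF ideal_zero] disj_succ[OF ideal_zero] zero_nS by auto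
next
  case (succ p) then show ?case using ideal_succ disj_succ by blast
next
  case (lim M)
  then show ?case using union_ideal[of M] by auto
qed

lemma pS_ideal: "two_sided_ideal (pS S)"
  unfolding pS_def using union_ideal[of "p_stages S"] stages_ideal p_stages.base by blast

lemma pS_disj: "s \<in> S \<Longrightarrow> s \<notin> pS S"
  unfolding pS_def using stages_ideal by blast


lemma pS_assl: assumes "s \<in> S" "s * r \<in> pS S" shows "r \<in> pS S"
proof -
  obtain p where p: "p \<in> p_stages S" "s * r \<in> p" using assms(2) unfolding pS_def by blast
  have "r - (r + 0) \<in> p" "0 * 1 \<in> p" using stages_zero[OF p(1)] by auto
  then have "r \<in> p_succ S p" unfolding p_succ_def using p assms(1) one_S by blast
  then show ?thesis unfolding pS_def using p_stages.succ[OF p(1)] by blast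
qed

lemma pS_assr: assumes "s \<in> S" "r * s \<in> pS S" shows "r \<in> pS S"
proof -
  obtain p where p: "p \<in> p_stages S" "r * s \<in> p" using assms(2) unfolding pS_def by blast
  have "r - (0 + r) \<in> p" "1 * 0 \<in> p" using stages_zero[OF p(1)] by auto
  then have "r \<in> p_succ S p" unfolding p_succ_def using p assms(1) one_S by blast
  then show ?thesis unfolding pS_def using p_stages.succ[OF p(1)] by blast
qed

lemma pS_JRS: "pS S \<in> JRS S"
proof -
  have z: "0 \<in> pS S" using idI[OF pS_ideal] .
  have ore_m: "ore_set_mod (pS S) S"
    unfolding ore_set_mod_def
  proof (intro conjI ballI allI)
    show "1 \<in> S" by (rule one_S)
  next
    fix s t assume "s \<in> S" "t \<in> S" then show "s * t \<in> S" by (rule mulS)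
  next
    fix s assume "s \<in> S" then show "s \<notin> pS S" by (rule pS_disj)
  next
    fix r s assume "s \<in> S"
    show "\<exists>s'\<in>S. \<exists>r'. s' * r - r' * s \<in> pS S" using oreL[OF \<open>s \<in> S\<close>, of r] z by (metis diff_self)
    show "\<exists>s'\<in>S. \<exists>r'. r * s' - s * r' \<in> pS S" using oreR[OF \<open>s \<in> S\<close>, of r] z by (metis diff_self)
  qed
  have den: "denominator_set_mod (pS S) S"
    unfolding denominator_set_mod_def
  proof (intro conjI ballI allI impI)
    show "ore_set_mod (pS S) S" by (rule ore_m)
  next
    fix r s assume "s \<in> S" "r * s \<in> pS S"
    then have "1 * r \<in> pS S" using pS_assr by simp
    then show "\<exists>t\<in>S. t * r \<in> pS S" using one_S by blast
  next
    fix r s assume "s \<in> S" "s * r \<in> pS S"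
    then have "r * 1 \<in> pS S" using pS_assl by simp
    then show "\<exists>t\<in>S. r * t \<in> pS S" using one_S by blast
  qed
  have "ass_mod_zero (pS S) S" unfolding ass_mod_zero_def using pS_assl by blast
  then show ?thesis unfolding JRS_def using pS_ideal den by blast
qed

lemma pS_min: assumes b: "b \<in> JRS S" shows "pS S \<subseteq> b"
proof -
  have bi: "two_sided_ideal b" and dm: "denominator_set_mod b S" and az: "ass_mod_zero b S"
    using b by (auto simp: JRS_def)
  have al: "\<And>s r. s \<in> S \<Longrightarrow> s * r \<in> b \<Longrightarrow> r \<in> b" using az by (auto simp: ass_mod_zero_def)
  have ar: "\<And>s r. s \<in> S \<Longrightarrow> r * s \<in> b \<Longrightarrow> r \<in> b"
  proof -
    fix s r assume "s \<in> S" "r * s \<in> b"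
    then obtain t where "t \<in> S" "t * r \<in> b" using dm by (auto simp: denominator_set_mod_def)
    then show "r \<in> b" using al by blast
  qed
  have sub: "p_succ S p \<subseteq> b" if "p \<subseteq> b" for p
  proof
    fix x assume "x \<in> p_succ S p"
    then obtain a c s t where x: "x - (a + c) \<in> p" "s \<in> S" "s * a \<in> p" "t \<in> S" "c * t \<in> p"
      unfolding p_succ_def by blast
    have "a \<in> b" "c \<in> b" using x that al ar by blast+
    then have "x - (a + c) + (a + c) \<in> b" using x that idA[OF bi] by blast
    then show "x \<in> b" by simp
  qed
  have "p \<subseteq> b" if "p \<in> p_stages S" for p
    using that
  proof (induction rule: p_stages.induct)
    case base
    show ?case unfolding p1_eq by (rule sub) (use idI[OF bi] in blast)
  next
    case (succ p) then show ?case using sub by blast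
  next
    case (lim M) then show ?case by blast
  qed
  then show ?thesis unfolding pS_def by blast
qed

lemma part3: assumes d: "denominator_set S" shows "pS S = ass S"
proof
  have ai: "two_sided_ideal (ass S)"
  proof -
    show ?thesis unfolding two_sided_ideal_def
    proof (intro conjI ballI allI)
      show "0 \<in> ass S" unfolding ass_def using one_S by auto
    next
      fix x y assume "x \<in> ass S" "y \<in> ass S"
      then obtain s t where "s \<in> S" "s * x \<in> {0}" "t \<in> S" "t * y \<in> {0}" unfolding ass_def by auto
      from A_add[OF ideal_zero this] show "x + y \<in> ass S" unfolding ass_def by auto
    next
      fix x assume "x \<in> ass S" then show "- x \<in> ass S" unfolding ass_def by auto
    next
      fix x r assume "x \<in> ass S"
      then obtain s where "s \<in> S" "s * x \<in> {0}" unfolding ass_def by auto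
      from A_lmul[OF ideal_zero this, of r] show "r * x \<in> ass S" unfolding ass_def by auto
      from \<open>x \<in> ass S\<close> show "x * r \<in> ass S" unfolding ass_def by (auto, metis mult.assoc mult_zero_left)
    qed
  qed
  have d1: "\<And>r s. s \<in> S \<Longrightarrow> r * s = 0 \<Longrightarrow> \<exists>t\<in>S. t * r = 0"
    using d by (auto simp: denominator_set_def)
  have al: "r \<in> ass S" if h1: "s \<in> S" and h2: "s * r \<in> ass S" for s r
  proof -
    obtain t where t: "t \<in> S" "t * (s * r) = 0" using h2 unfolding ass_def by auto
    then have "(t * s) * r = 0" by (simp add: mult.assoc)
    then show "r \<in> ass S" unfolding ass_def using mulS[OF t(1) h1] by blast
  qed
  have "ass S \<in> JRS S"
    unfolding JRS_def mem_Collect_eq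
  proof (intro conjI)
    show "two_sided_ideal (ass S)" by (rule ai)
    show "ass_mod_zero (ass S) S" unfolding ass_mod_zero_def using al by blast
    have om: "ore_set_mod (ass S) S"
      unfolding ore_set_mod_def
    proof (intro conjI ballI allI)
      show "1 \<in> S" by (rule one_S)
    next
      fix s t assume "s \<in> S" "t \<in> S" then show "s * t \<in> S" by (rule mulS)
    next
      fix s assume s: "s \<in> S"
      show "s \<notin> ass S"
      proof
        assume "s \<in> ass S"
        then obtain t where "t \<in> S" "t * s = 0" unfolding ass_def by auto
        then show False using mulS[OF _ s, of t] zero_nS by simp
      qed
    next
      fix r s assume "s \<in> S"
      show "\<exists>s'\<in>S. \<exists>r'. s' * r - r' * s \<in> ass S" using oreL[OF \<open>s \<in> S\<close>, of r] idI[OF ai] by (metis diff_self)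
      show "\<exists>s'\<in>S. \<exists>r'. r * s' - s * r' \<in> ass S" using oreR[OF \<open>s \<in> S\<close>, of r] idI[OF ai] by (metis diff_self)
    qed
    show "denominator_set_mod (ass S) S"
      unfolding denominator_set_mod_def
    proof (intro conjI ballI allI impI)
      show "ore_set_mod (ass S) S" by (rule om)
    next
      fix r s assume "s \<in> S" "r * s \<in> ass S"
      then obtain t where t: "t \<in> S" "t * (r * s) = 0" unfolding ass_def by auto
      then have "(t * r) * s = 0" by (simp add: mult.assoc)
      then obtain t' where "t' \<in> S" "t' * (t * r) = 0" using d1 \<open>s \<in> S\<close> by blast
      then show "\<exists>t\<in>S. t * r \<in> ass S" using t(1) unfolding ass_def by blast
    next
      fix r s assume "s \<in> S" "s * r \<in> ass S"
      then have "r * 1 \<in> ass S" using al by simp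
      then show "\<exists>t\<in>S. r * t \<in> ass S" using one_S by blast
    qed
  qed
  then show "pS S \<subseteq> ass S" by (rule pS_min)
next
  have "ass S \<subseteq> p1 S"
  proof
    fix x assume "x \<in> ass S"
    then have "x \<in> ass_l S" "0 \<in> ass_r S" "x = x + 0"
      unfolding ass_def ass_l_def ass_r_def using one_S by auto
    then show "x \<in> p1 S" unfolding p1_def set_plus_def by blast
  qed
  then show "ass S \<subseteq> pS S" unfolding pS_def using p_stages.base by blast
qed

end

theorem theorem4p15:
  fixes S :: "'a::ring_1 set"
  assumes "ore_set S"
  shows "JRS S \<noteq> {} \<and>
         (pS S \<in> JRS S \<and> (\<forall>b\<in>JRS S. pS S \<subseteq> b)) \<and>
         (\<forall>a. denominator_set S \<and> ass S = a \<longrightarrow> pS S = a)"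
  using pS_JRS[OF assms] pS_min[OF assms] part3[OF assms] by blast

end
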